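(* Let $\kappa=(\kappa_1,\dots,\kappa_n)\in\mathbb{R}^n$ and $\xi\in\mathbb{R}^n$. (1) Suppose $\kappa\in\Gamma_{\ell+2}$ and let $i_1,\dots,i_\ell$ be distinct indices. Then $$-\partial^2_\xi q_{2;i_1,\dots,i_\ell}\geq \frac{\big|[\xi]^\perp_{i_1,\dots,i_\ell}\big|^2}{\sigma_1(\kappa|i_1,\dots,i_\ell)}.$$ (2) Suppose $\kappa\in\Gamma_{k+2}$ and let $i_1$ be an index. Then $$-\partial^2_\xi q_{k+1;i_1}\geq -\sum_{i\in\{1,\dots,n\}\setminus\{i_1\}}\frac{\kappa_i^2\,\partial^2_{[\xi]_{i_1,i}}q_k([\kappa]_{i_1,i})}{(k+1)\,(q_{k;i_1,i}+\kappa_i)^2}.$$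
   Context: $\sigma_m$ denotes the $m$-th elementary symmetric polynomial and $\Gamma_m=\{\kappa:\sigma_j(\kappa)>0,\ 1\le j\le m\}$ the Gårding cone. $\sigma_m(\kappa|i_1,\dots,i_r)$ denotes $\sigma_m$ evaluated on $\kappa$ with the entries $\kappa_{i_1},\dots,\kappa_{i_r}$ removed (equivalently set to zero). $q_m=\sigma_m/\sigma_{m-1}$, and $q_{m;i_1,\dots,i_r}(\kappa)=\sigma_m(\kappa|i_1,\dots,i_r)/\sigma_{m-1}(\kappa|i_1,\dots,i_r)$. For a vector $v$, $[v]_{i_1,\dots,i_r}$ denotes the vector obtained by setting its $i_1$-th, ..., $i_r$-th components to zero; $[\xi]^\perp_{i_1,\dots,i_r}$ denotes the component of $[\xi]_{i_1,\dots,i_r}$ orthogonal to $[\kappa]_{i_1,\dots,i_r}$. $\partial_\xi^2 f$ denotes the second directional derivative of $f$ at $\kappa$ in direction $\xi$, i.e. $\sum_{p,q}\frac{\partial^2 f}{\partial\kappa_p\partial\kappa_q}\xi_p\xi_q$; $\partial^2_{[\xi]_{i_1,i}}q_k([\kappa]_{i_1,i})$ is the second derivative of $q_k$ at $[\kappa]_{i_1,i}$ in direction $[\xi]_{i_1,i}$. *)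

theory Defs
  imports "HOL-Analysis.Analysis"
begin

definition sigma :: "nat \<Rightarrow> real^'n \<Rightarrow> real" where
  "sigma m x = (\<Sum>S\<in>{S::'n set. card S = m}. \<Prod>i\<in>S. x $ i)"

definition garding_cone :: "nat \<Rightarrow> (real^'n) set" where
  "garding_cone m = {x. \<forall>j\<in>{1..m}. sigma j x > 0}"

definition zero_out :: "'n set \<Rightarrow> real^'n \<Rightarrow> real^'n" where
  "zero_out I v = (\<chi> i. if i \<in> I then 0 else v $ i)"

definition sigma_del :: "nat \<Rightarrow> 'n set \<Rightarrow> real^'n \<Rightarrow> real" where
  "sigma_del m I x = sigma m (zero_out I x)"

definition q :: "nat \<Rightarrow> real^'n \<Rightarrow> real" where
  "q m x = sigma m x / sigma (m - 1) x"

definition q_del :: "nat \<Rightarrow> 'n set \<Rightarrow> real^'n \<Rightarrow> real" where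
  "q_del m I x = sigma_del m I x / sigma_del (m - 1) I x"

definition perp_part :: "'n set \<Rightarrow> real^'n \<Rightarrow> real^'n \<Rightarrow> real^'n" where
  "perp_part I \<kappa> \<xi> = zero_out I \<xi> -
     ((zero_out I \<xi> \<bullet> zero_out I \<kappa>) / (norm (zero_out I \<kappa>))^2) *\<^sub>R zero_out I \<kappa>"

definition partial :: "'n \<Rightarrow> (real^'n \<Rightarrow> real) \<Rightarrow> real^'n \<Rightarrow> real" where
  "partial p f x = deriv (\<lambda>t. f (x + t *\<^sub>R axis p 1)) 0"

definition d2 :: "(real^'n \<Rightarrow> real) \<Rightarrow> real^'n \<Rightarrow> real^'n \<Rightarrow> real" where
  "d2 f x \<xi> = (\<Sum>p\<in>UNIV. \<Sum>r\<in>UNIV. partial p (partial r f) x * \<xi> $ p * \<xi> $ r)"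

end

theory Submission
  imports Defs "HOL-Computational_Algebra.Polynomial"
begin

definition esym :: "'a set \<Rightarrow> ('a \<Rightarrow> real) \<Rightarrow> nat \<Rightarrow> real" where
  "esym S x j = (\<Sum>T\<in>{T. T \<subseteq> S \<and> card T = j}. \<Prod>i\<in>T. x i)"

lemma esym_0[simp]: "finite S \<Longrightarrow> esym S x 0 = 1"
proof -
  assume "finite S"
  hence "{T. T \<subseteq> S \<and> card T = 0} = {{}}" by (auto dest: finite_subset)
  thus ?thesis by (simp add: esym_def)
qed

lemma esym_gt: "finite S \<Longrightarrow> card S < j \<Longrightarrow> esym S x j = 0"
proof -
  assume "finite S" "card S < j"
  hence e: "{T. T \<subseteq> S \<and> card T = j} = {}"
    using card_mono[of S] by (metis (mono_tags, lifting) Collect_empty_eq leD)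
  show ?thesis unfolding esym_def e by simp
qed

lemma esym_empty: "esym {} x (Suc j) = 0"
  by (simp add: esym_gt)

lemma esym_insert:
  assumes fin: "finite S" and a: "a \<notin> S"
  shows "esym (insert a S) x (Suc j) = esym S x (Suc j) + x a * esym S x j"
proof -
  have split: "{T. T \<subseteq> insert a S \<and> card T = Suc j} =
      {T. T \<subseteq> S \<and> card T = Suc j} \<union> insert a ` {T. T \<subseteq> S \<and> card T = j}"
  proof (rule set_eqI, rule iffI)
    fix T assume T: "T \<in> {T. T \<subseteq> insert a S \<and> card T = Suc j}"
    show "T \<in> {T. T \<subseteq> S \<and> card T = Suc j} \<union> insert a ` {T. T \<subseteq> S \<and> card T = j}"
    proof (cases "a \<in> T")
      case True
      have "T = insert a (T - {a})" using True by auto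
      moreover have "T - {a} \<subseteq> S" using T by auto
      moreover have "card (T - {a}) = j" using T True fin
        by (metis (mono_tags, lifting) card_Diff_singleton diff_Suc_1 finite_insert mem_Collect_eq rev_finite_subset)
      ultimately show ?thesis by blast
    next
      case False thus ?thesis using T by auto
    qed
  next
    fix T assume "T \<in> {T. T \<subseteq> S \<and> card T = Suc j} \<union> insert a ` {T. T \<subseteq> S \<and> card T = j}"
    thus "T \<in> {T. T \<subseteq> insert a S \<and> card T = Suc j}"
    proof
      assume "T \<in> {T. T \<subseteq> S \<and> card T = Suc j}" thus ?thesis by auto
    next
      assume "T \<in> insert a ` {T. T \<subseteq> S \<and> card T = j}"
      then obtain U where U: "U \<subseteq> S" "card U = j" "T = insert a U" by auto
      have "finite U" using U fin finite_subset by auto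
      moreover have "a \<notin> U" using U a by auto
      ultimately show ?thesis using U by auto
    qed
  qed
  have disj: "{T. T \<subseteq> S \<and> card T = Suc j} \<inter> insert a ` {T. T \<subseteq> S \<and> card T = j} = {}"
    using a by auto
  have inj: "inj_on (insert a) {T. T \<subseteq> S \<and> card T = j}"
    using a by (auto simp: inj_on_def)
  have finA: "finite {T. T \<subseteq> S \<and> card T = Suc j}" using fin by auto
  have finB: "finite {T. T \<subseteq> S \<and> card T = j}" using fin by auto
  have "esym (insert a S) x (Suc j) = esym S x (Suc j) +
      (\<Sum>T\<in>insert a ` {T. T \<subseteq> S \<and> card T = j}. \<Prod>i\<in>T. x i)"
    unfolding esym_def split using finA finB disj by (simp add: sum.union_disjoint)
  also have "(\<Sum>T\<in>insert a ` {T. T \<subseteq> S \<and> card T = j}. \<Prod>i\<in>T. x i)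
      = (\<Sum>T\<in>{T. T \<subseteq> S \<and> card T = j}. \<Prod>i\<in>insert a T. x i)"
    using inj by (simp add: sum.reindex)
  also have "\<dots> = (\<Sum>T\<in>{T. T \<subseteq> S \<and> card T = j}. x a * (\<Prod>i\<in>T. x i))"
    using a fin by (intro sum.cong refl) (auto dest: finite_subset intro!: prod.insert)
  also have "\<dots> = x a * esym S x j" by (simp add: esym_def sum_distrib_left)
  finally show ?thesis .
qed


lemma esym_remove:
  assumes "finite S" "i \<in> S"
  shows "esym S x (Suc j) = esym (S - {i}) x (Suc j) + x i * esym (S - {i}) x j"
proof -
  have "S = insert i (S - {i})" using assms by auto
  hence "esym S x (Suc j) = esym (insert i (S - {i})) x (Suc j)" by simp
  also have "\<dots> = esym (S - {i}) x (Suc j) + x i * esym (S - {i}) x j"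
    using assms by (intro esym_insert) auto
  finally show ?thesis .
qed

lemma esym_1: "finite S \<Longrightarrow> esym S x (Suc 0) = sum x S"
proof (induction S rule: finite_induct)
  case empty thus ?case by (simp add: esym_empty)
next
  case (insert a S) thus ?case by (simp add: esym_insert)
qed

lemma esym_2': "finite S \<Longrightarrow> 2 * esym S x 2 = (sum x S)^2 - (\<Sum>i\<in>S. (x i)^2)"
proof (induction S rule: finite_induct)
  case empty thus ?case by (simp add: esym_empty numeral_2_eq_2)
next
  case (insert a S)
  have e: "esym (insert a S) x 2 = esym S x 2 + x a * sum x S"
    using insert esym_insert[of S a x 1] by (simp add: numeral_2_eq_2 esym_1)
  have "2 * esym (insert a S) x 2 = (sum x S)^2 - (\<Sum>i\<in>S. (x i)^2) + 2 * x a * sum x S"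
    unfolding e using insert.IH by (simp add: algebra_simps)
  also have "\<dots> = (sum x (insert a S))^2 - (\<Sum>i\<in>insert a S. (x i)^2)"
    using insert.hyps by (simp add: power2_eq_square algebra_simps)
  finally show ?case .
qed

lemma esym_2: "finite S \<Longrightarrow> esym S x 2 = ((sum x S)^2 - (\<Sum>i\<in>S. (x i)^2)) / 2"
  using esym_2'[of S x] by simp

lemma esym_zero_remove:
  assumes "finite S" "i \<in> S" "x i = 0"
  shows "esym S x j = esym (S - {i}) x j"
proof (cases j)
  case 0 thus ?thesis using assms by simp
next
  case (Suc j') thus ?thesis using esym_remove[OF assms(1,2)] assms(3) by simp
qed

lemma esym_zero_set:
  assumes "finite Z" "finite S" "\<forall>i\<in>Z. x i = 0"
  shows "esym S x j = esym (S - Z) x j"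
  using assms
proof (induction Z arbitrary: S rule: finite_induct)
  case empty thus ?case by simp
next
  case (insert a Z)
  have "esym S x j = esym (S - Z) x j" using insert.IH[of S] insert.prems by blast
  also have "\<dots> = esym (S - Z - {a}) x j"
  proof (cases "a \<in> S - Z")
    case True thus ?thesis using insert.prems by (intro esym_zero_remove) auto
  next
    case False thus ?thesis by simp
  qed
  also have "S - Z - {a} = S - insert a Z" by auto
  finally show ?case .
qed

lemma esym_euler:
  assumes "finite S"
  shows "real (Suc k) * esym S x (Suc k) = (\<Sum>i\<in>S. x i * esym (S - {i}) x k)"
  using assms
proof (induction S arbitrary: k rule: finite_induct)
  case empty thus ?case by (simp add: esym_empty)
next
  case (insert a S k)
  have IH: "\<And>k. real (Suc k) * esym S x (Suc k) = (\<Sum>i\<in>S. x i * esym (S - {i}) x k)"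
    using insert by blast
  have rem: "\<And>i. i \<in> S \<Longrightarrow> insert a S - {i} = insert a (S - {i})" using insert by auto
  have aS: "insert a S - {a} = S" using insert by auto
  show ?case
  proof (cases k)
    case 0
    thus ?thesis using insert by (simp add: esym_1 esym_insert)
  next
    case (Suc k')
    have "(\<Sum>i\<in>insert a S. x i * esym (insert a S - {i}) x k)
        = x a * esym S x k + (\<Sum>i\<in>S. x i * esym (insert a (S - {i})) x k)"
      using insert rem aS by (simp add: sum.insert)
    also have "(\<Sum>i\<in>S. x i * esym (insert a (S - {i})) x k)
        = (\<Sum>i\<in>S. x i * esym (S - {i}) x k) + x a * (\<Sum>i\<in>S. x i * esym (S - {i}) x k')"
      using insert Suc by (simp add: esym_insert sum.distrib sum_distrib_left algebra_simps)
    also have "\<dots> = real (Suc k) * esym S x (Suc k) + x a * (real k * esym S x k)"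
      using IH[of k] IH[of k'] Suc by simp
    finally have "(\<Sum>i\<in>insert a S. x i * esym (insert a S - {i}) x k)
       = x a * esym S x k + real (Suc k) * esym S x (Suc k) + x a * (real k * esym S x k)" by simp
    moreover have "esym (insert a S) x (Suc k) = esym S x (Suc k) + x a * esym S x k"
      using insert by (simp add: esym_insert)
    ultimately show ?thesis by (simp add: algebra_simps)
  qed
qed

lemma esym_card: "finite S \<Longrightarrow> esym S x (card S) = prod x S"
proof -
  assume fin: "finite S"
  hence "{T. T \<subseteq> S \<and> card T = card S} = {S}"
    using card_subset_eq[OF fin] by auto
  thus ?thesis by (simp add: esym_def)
qed

lemma esym_reindex:
  assumes "bij_betw h A B"
  shows "esym B x j = esym A (x \<circ> h) j"
proof -
  have inj: "inj_on h A" using assms by (rule bij_betw_imp_inj_on)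
  have img: "h ` A = B" using assms by (rule bij_betw_imp_surj_on)
  have eq: "{T. T \<subseteq> B \<and> card T = j} = (\<lambda>T. h ` T) ` {T. T \<subseteq> A \<and> card T = j}"
  proof (rule set_eqI, rule iffI)
    fix T assume T: "T \<in> {T. T \<subseteq> B \<and> card T = j}"
    define U where "U = A \<inter> h -` T"
    have U1: "h ` U = T" using T img unfolding U_def by auto
    have U2: "U \<subseteq> A" unfolding U_def by auto
    have "inj_on h U" using inj U2 by (rule inj_on_subset)
    hence "card U = card T" using U1 card_image by metis
    hence "card U = j" using T by simp
    thus "T \<in> (\<lambda>T. h ` T) ` {T. T \<subseteq> A \<and> card T = j}" using U1 U2 by blast
  next
    fix T assume "T \<in> (\<lambda>T. h ` T) ` {T. T \<subseteq> A \<and> card T = j}"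
    then obtain U where U: "U \<subseteq> A" "card U = j" "T = h ` U" by auto
    have "inj_on h U" using inj U(1) by (rule inj_on_subset)
    hence "card T = j" using U card_image by metis
    moreover have "T \<subseteq> B" using U img by auto
    ultimately show "T \<in> {T. T \<subseteq> B \<and> card T = j}" by simp
  qed
  have injI: "inj_on (\<lambda>T. h ` T) {T. T \<subseteq> A \<and> card T = j}"
  proof (rule inj_onI)
    fix U V assume "U \<in> {T. T \<subseteq> A \<and> card T = j}" "V \<in> {T. T \<subseteq> A \<and> card T = j}" "h ` U = h ` V"
    thus "U = V" using inj_on_image_eq_iff[OF inj] by blast
  qed
  have "esym B x j = (\<Sum>T\<in>{T. T \<subseteq> A \<and> card T = j}. \<Prod>i\<in>h ` T. x i)"
    unfolding esym_def eq using sum.reindex[OF injI] by simp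
  also have "\<dots> = esym A (x \<circ> h) j" unfolding esym_def
  proof (intro sum.cong refl)
    fix T assume "T \<in> {T. T \<subseteq> A \<and> card T = j}"
    hence "inj_on h T" using inj inj_on_subset by blast
    thus "(\<Prod>i\<in>h ` T. x i) = prod (x \<circ> h) T" by (rule prod.reindex)
  qed
  finally show ?thesis .
qed

lemma esym_compl:
  assumes fin: "finite S" and nz: "\<forall>i\<in>S. x i \<noteq> 0" and j: "j \<le> card S"
  shows "esym S x (card S - j) = prod x S * esym S (\<lambda>i. inverse (x i)) j"
proof -
  have "esym S x (card S - j) = (\<Sum>U\<in>{T. T \<subseteq> S \<and> card T = j}. \<Prod>i\<in>S - U. x i)"
    unfolding esym_def
  proof (rule sum.reindex_bij_witness[where i="\<lambda>T. S - T" and j="\<lambda>T. S - T"])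
    fix a assume a: "a \<in> {T. T \<subseteq> S \<and> card T = card S - j}"
    show "S - (S - a) = a" using a by auto
    have "finite a" using a fin finite_subset by auto
    have "card (S - a) = card S - card a" using a fin by (simp add: card_Diff_subset \<open>finite a\<close>)
    thus "S - a \<in> {T. T \<subseteq> S \<and> card T = j}" using a j by auto
  next
    fix b assume b: "b \<in> {T. T \<subseteq> S \<and> card T = j}"
    show "S - (S - b) = b" using b by auto
    have "finite b" using b fin finite_subset by auto
    have "card (S - b) = card S - card b" using b fin by (simp add: card_Diff_subset \<open>finite b\<close>)
    thus "S - b \<in> {T. T \<subseteq> S \<and> card T = card S - j}" using b by auto
  next
    fix a assume a: "a \<in> {T. T \<subseteq> S \<and> card T = card S - j}"
    hence "S - (S - a) = a" by auto
    thus "(\<Prod>i\<in>S - (S - a). x i) = (\<Prod>i\<in>a. x i)" by simp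
  qed
  also have "\<dots> = (\<Sum>U\<in>{T. T \<subseteq> S \<and> card T = j}. prod x S * (\<Prod>i\<in>U. inverse (x i)))"
  proof (intro sum.cong refl)
    fix U assume U: "U \<in> {T. T \<subseteq> S \<and> card T = j}"
    have "U \<subseteq> S" using U by simp
    hence "prod x S = prod x (S - U) * prod x U" using fin by (rule prod.subset_diff)
    hence "prod x S = prod x U * prod x (S - U)" by (simp add: mult.commute)
    moreover have "prod x U * (\<Prod>i\<in>U. inverse (x i)) = 1"
      using U nz by (simp add: prod.distrib[symmetric] subset_iff)
    ultimately show "(\<Prod>i\<in>S - U. x i) = prod x S * (\<Prod>i\<in>U. inverse (x i))"
      by (metis (no_types, lifting) mult.assoc mult.commute mult.right_neutral)
  qed
  also have "\<dots> = prod x S * esym S (\<lambda>i. inverse (x i)) j"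
    by (simp add: esym_def sum_distrib_left)
  finally show ?thesis .
qed

lemma esym_top:
  assumes fin: "finite S" and N: "card S = N" "2 \<le> N"
  shows "2 * real N * esym S x N * esym S x (N - 2) \<le> real (N - 1) * (esym S x (N - 1))^2"
proof (cases "\<exists>i\<in>S. x i = 0")
  case True
  hence "prod x S = 0" using fin by (simp add: prod_zero_iff)
  hence "esym S x N = 0" using esym_card[OF fin, of x] N by simp
  thus ?thesis by simp
next
  case False
  hence nz: "\<forall>i\<in>S. x i \<noteq> 0" by blast
  define u where "u = (\<lambda>i. inverse (x i))"
  define P where "P = prod x S"
  have e0: "esym S x N = P" using esym_card[OF fin, of x] N P_def by simp
  have e1: "esym S x (N - 1) = P * sum u S"
    using esym_compl[OF fin nz, of 1] N esym_1[OF fin, of u] unfolding P_def u_def by simp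
  have e2: "esym S x (N - 2) = P * esym S u 2"
    using esym_compl[OF fin nz, of 2] N unfolding P_def u_def by simp
  have cs: "(sum u S)^2 \<le> real N * (\<Sum>i\<in>S. (u i)^2)"
    using Cauchy_Schwarz_ineq_sum[of "\<lambda>i. 1" u S] N by simp
  have q: "2 * esym S u 2 = (sum u S)^2 - (\<Sum>i\<in>S. (u i)^2)" using esym_2'[OF fin] .
  have "2 * real N * esym S x N * esym S x (N - 2) = P^2 * (real N * (2 * esym S u 2))"
    unfolding e0 e2 by (simp add: power2_eq_square algebra_simps)
  also have "\<dots> = P^2 * (real N * ((sum u S)^2 - (\<Sum>i\<in>S. (u i)^2)))" unfolding q ..
  also have "\<dots> \<le> P^2 * (real (N - 1) * (sum u S)^2)"
  proof (rule mult_left_mono)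
    have "real (N - 1) = real N - 1" using N by simp
    thus "real N * ((sum u S)^2 - (\<Sum>i\<in>S. (u i)^2)) \<le> real (N - 1) * (sum u S)^2"
      using cs by (simp add: algebra_simps)
  qed simp
  also have "\<dots> = real (N - 1) * (esym S x (N - 1))^2"
    unfolding e1 by (simp add: power2_eq_square algebra_simps)
  finally show ?thesis .
qed

definition lp :: "('a \<Rightarrow> real) \<Rightarrow> 'a set \<Rightarrow> real poly" where
  "lp x S = (\<Prod>i\<in>S. [:x i, 1:])"

lemma lin_mult: "[:c::real, 1:] * p = smult c p + pCons 0 p"
  by (simp add: mult_pCons_left smult_one)

lemma coeff_lp:
  assumes "finite S"
  shows "coeff (lp x S) m = (if m \<le> card S then esym S x (card S - m) else 0)"
  using assms
proof (induction S arbitrary: m rule: finite_induct)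
  case empty thus ?case by (simp add: lp_def coeff_1)
next
  case (insert a S m)
  let ?N = "card S"
  have IH: "\<And>m. coeff (lp x S) m = (if m \<le> ?N then esym S x (?N - m) else 0)" using insert by blast
  have lpi: "lp x (insert a S) = smult (x a) (lp x S) + pCons 0 (lp x S)"
    using insert by (simp add: lp_def lin_mult)
  have ci: "card (insert a S) = Suc ?N" using insert by simp
  show ?case
  proof (cases m)
    case 0
    have "coeff (lp x (insert a S)) m = x a * esym S x ?N" using 0 by (simp add: lpi IH)
    also have "\<dots> = esym (insert a S) x (Suc ?N)"
      using esym_insert[OF insert.hyps, of x ?N] esym_gt[OF insert.hyps(1), of "Suc ?N" x] by simp
    finally show ?thesis using 0 ci by simp
  next
    case (Suc m')
    show ?thesis
    proof (cases "m' < ?N")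
      case True
      have "coeff (lp x (insert a S)) m = x a * esym S x (?N - Suc m') + esym S x (?N - m')"
        using Suc True by (simp add: lpi IH)
      also have "?N - m' = Suc (?N - Suc m')" using True by simp
      also have "x a * esym S x (?N - Suc m') + esym S x (Suc (?N - Suc m')) = esym (insert a S) x (Suc (?N - Suc m'))"
        using esym_insert[OF insert.hyps, of x "?N - Suc m'"] by simp
      finally have "coeff (lp x (insert a S)) m = esym (insert a S) x (Suc (?N - Suc m'))" .
      moreover have "Suc (?N - Suc m') = Suc ?N - m" using Suc True by simp
      ultimately show ?thesis using ci Suc True by simp
    next
      case False
      show ?thesis
      proof (cases "m' = ?N")
        case True
        have "coeff (lp x (insert a S)) m = 1" using Suc True insert.hyps by (simp add: lpi IH)
        thus ?thesis using Suc True ci insert.hyps by simp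
      next
        case False
        hence "?N < m'" using \<open>\<not> m' < ?N\<close> by simp
        thus ?thesis using Suc ci by (simp add: lpi IH)
      qed
    qed
  qed
qed

lemma poly_lp: "poly (lp x S) t = (\<Prod>i\<in>S. t + x i)"
  by (simp add: lp_def poly_prod add.commute)

lemma rolle_lp:
  assumes inj: "inj_on x {..<Suc M}" and M: "1 \<le> M"
  shows "\<exists>y. inj_on y {..<M} \<and>
    (\<forall>j\<le>M. real (Suc M - j) * esym {..<Suc M} x j = real (Suc M) * esym {..<M} y j)"
proof -
  define N where "N = Suc M"
  define f where "f = lp x {..<N}"
  define R where "R = (\<lambda>i. - x i) ` {..<N}"
  have injR: "inj_on (\<lambda>i. - x i) {..<N}" using inj unfolding N_def inj_on_def by auto
  have cardR: "card R = N" unfolding R_def using card_image[OF injR] by simp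
  have finR: "finite R" unfolding R_def by simp
  define rs where "rs = sorted_list_of_set R"
  have rs_len: "length rs = N" unfolding rs_def using cardR by simp
  have rs_set: "set rs = R" unfolding rs_def using finR by simp
  have rs_sort: "sorted_wrt (<) rs" unfolding rs_def by (rule strict_sorted_list_of_set)
  have root: "poly f (rs ! l) = 0" if "l < N" for l
  proof -
    have "rs ! l \<in> R" using that rs_len rs_set nth_mem by metis
    then obtain i where i: "i < N" "rs ! l = - x i" unfolding R_def by auto
    show ?thesis unfolding f_def poly_lp using i by (intro prod_zero) auto
  qed
  have "\<forall>l. \<exists>z. l < M \<longrightarrow> rs ! l < z \<and> z < rs ! Suc l \<and> poly (pderiv f) z = 0"
  proof (intro allI impI)
    fix l show "\<exists>z. l < M \<longrightarrow> rs ! l < z \<and> z < rs ! Suc l \<and> poly (pderiv f) z = 0"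
    proof (cases "l < M")
      case True
      have lt: "rs ! l < rs ! Suc l" using sorted_wrt_nth_less[OF rs_sort, of l "Suc l"] True rs_len
        unfolding N_def by simp
      obtain z where z: "rs ! l < z" "z < rs ! Suc l"
        "poly f (rs ! Suc l) - poly f (rs ! l) = (rs ! Suc l - rs ! l) * poly (pderiv f) z"
        using poly_MVT[OF lt] by blast
      have "poly (pderiv f) z = 0" using z root[of l] root[of "Suc l"] True lt unfolding N_def by simp
      thus ?thesis using z by blast
    qed simp
  qed
  then obtain z where z: "\<And>l. l < M \<Longrightarrow> rs ! l < z l \<and> z l < rs ! Suc l \<and> poly (pderiv f) (z l) = 0"
    by metis
  have zmono: "z l < z l'" if "l < l'" "l' < M" for l l'
  proof -
    have "rs ! Suc l \<le> rs ! l'"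
    proof (cases "Suc l = l'")
      case False
      thus ?thesis using sorted_wrt_nth_less[OF rs_sort, of "Suc l" l'] that rs_len unfolding N_def by simp
    qed simp
    thus ?thesis using z[of l] z[of l'] that by simp
  qed
  have zinj: "inj_on z {..<M}"
  proof (rule inj_onI)
    fix l l' assume "l \<in> {..<M}" "l' \<in> {..<M}" "z l = z l'"
    thus "l = l'" using zmono[of l l'] zmono[of l' l] by (cases l l' rule: linorder_cases) auto
  qed
  define y where "y = (\<lambda>l. - z l)"
  have yinj: "inj_on y {..<M}" using zinj unfolding y_def inj_on_def by auto
  define Q where "Q = smult (real N) (lp y {..<M})"
  define D where "D = pderiv f - Q"
  have cD: "coeff D i = 0" if "i \<ge> M" for i
  proof (cases "i = M")
    case True
    thus ?thesis unfolding D_def Q_def f_def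
      by (simp add: coeff_pderiv coeff_lp N_def)
  next
    case False
    thus ?thesis using that unfolding D_def Q_def f_def
      by (simp add: coeff_pderiv coeff_lp N_def)
  qed
  have "D = 0"
  proof (rule ccontr)
    assume D0: "D \<noteq> 0"
    have "degree D \<le> M - 1" using cD by (intro degree_le) auto
    moreover have "card {t. poly D t = 0} \<le> degree D" using card_poly_roots_bound[OF D0] .
    moreover have "z ` {..<M} \<subseteq> {t. poly D t = 0}"
    proof
      fix t assume "t \<in> z ` {..<M}"
      then obtain l where l: "l < M" "t = z l" by auto
      have "poly (lp y {..<M}) t = 0" unfolding poly_lp using l
        by (intro prod_zero) (auto simp: y_def)
      thus "t \<in> {t. poly D t = 0}" using z[of l] l unfolding D_def Q_def by simp
    qed
    hence "card (z ` {..<M}) \<le> card {t. poly D t = 0}"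
      using poly_roots_finite[OF D0] by (rule card_mono[rotated])
    moreover have "card (z ` {..<M}) = M" using card_image[OF zinj] by simp
    ultimately show False using M by simp
  qed
  hence PQ: "pderiv f = Q" unfolding D_def by simp
  have rel: "real (Suc M - j) * esym {..<Suc M} x j = real (Suc M) * esym {..<M} y j" if j: "j \<le> M" for j
  proof -
    have "coeff (pderiv f) (M - j) = coeff Q (M - j)" using PQ by simp
    moreover have "coeff (pderiv f) (M - j) = real (Suc M - j) * esym {..<Suc M} x j"
      unfolding f_def N_def using j by (simp add: coeff_pderiv coeff_lp Suc_diff_le)
    moreover have "coeff Q (M - j) = real (Suc M) * esym {..<M} y j"
      unfolding Q_def N_def using j by (simp add: coeff_lp)
    ultimately show ?thesis by simp
  qed
  show ?thesis using yinj rel by blast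
qed


lemma newton_alg:
  fixes A B C A' B' C' N j m :: real
  assumes m: "m \<ge> 2" and N: "N > 0" and j: "j \<ge> 1"
    and rA: "(m + 1) * A = N * A'" and rB: "m * B = N * B'" and rC: "(m - 1) * C = N * C'"
    and IH: "(j + 1) * m * (A' * C') \<le> j * (m - 1) * B'^2"
  shows "(j + 1) * (m + 1) * (A * C) \<le> j * m * B^2"
proof -
  have A: "A = N * A' / (m + 1)" using rA m by (simp add: field_simps)
  have B: "B = N * B' / m" using rB m by (simp add: field_simps)
  have C: "C = N * C' / (m - 1)" using rC m by (simp add: field_simps)
  have p1: "m + 1 \<noteq> 0" "m - 1 \<noteq> 0" "m \<noteq> 0" using m by auto
  have "(j + 1) * (m + 1) * (A * C) = (j + 1) * (N * A') * (N * C') / (m - 1)"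
    unfolding A C using p1 by simp
  also have "\<dots> = (N^2 / (m * (m - 1))) * ((j + 1) * m * (A' * C'))"
    using p1 by (simp add: power2_eq_square)
  also have "\<dots> \<le> (N^2 / (m * (m - 1))) * (j * (m - 1) * B'^2)"
    using IH m by (intro mult_left_mono) auto
  also have "\<dots> = j * m * B^2"
    unfolding B using m by (simp add: field_simps power2_eq_square)
  finally show ?thesis .
qed

lemma newton_inj:
  "inj_on x {..<N} \<Longrightarrow> 1 \<le> j \<Longrightarrow> j + 1 \<le> N \<Longrightarrow>
   real (j + 1) * real (N - j + 1) * (esym {..<N} x (j - 1) * esym {..<N} x (j + 1))
     \<le> real j * real (N - j) * (esym {..<N} x j)^2"
proof (induction N arbitrary: x j)
  case 0 thus ?case by simp
next
  case (Suc M x j)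
  show ?case
  proof (cases "j = M")
    case True
    have "2 * real (Suc M) * esym {..<Suc M} x (Suc M) * esym {..<Suc M} x (Suc M - 2)
        \<le> real (Suc M - 1) * (esym {..<Suc M} x (Suc M - 1))^2"
      using Suc.prems True by (intro esym_top) auto
    moreover have "Suc M - 2 = j - 1" "Suc M - 1 = j" "j + 1 = Suc M" "Suc M - j + 1 = 2"
      using True Suc.prems by auto
    ultimately show ?thesis using True by (simp add: algebra_simps)
  next
    case False
    hence jM: "j + 1 \<le> M" using Suc.prems by simp
    obtain y where y: "inj_on y {..<M}"
      "\<And>i. i \<le> M \<Longrightarrow> real (Suc M - i) * esym {..<Suc M} x i = real (Suc M) * esym {..<M} y i"
      using rolle_lp[OF Suc.prems(1), of] jM Suc.prems(2) by (metis add_leD2 le_add2 order_trans)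
    have IH: "real (j + 1) * real (M - j + 1) * (esym {..<M} y (j - 1) * esym {..<M} y (j + 1))
       \<le> real j * real (M - j) * (esym {..<M} y j)^2"
      using Suc.IH[OF y(1) Suc.prems(2) jM] .
    define m where "m = real (Suc M - j)"
    have m2: "m \<ge> 2" unfolding m_def using jM by simp
    have e1: "real (Suc M - (j - 1)) = m + 1" unfolding m_def using Suc.prems(2) jM by simp
    have e2: "real (Suc M - (j + 1)) = m - 1" unfolding m_def using jM by simp
    have e3: "real (M - j + 1) = m" unfolding m_def using jM by simp
    have e4: "real (M - j) = m - 1" unfolding m_def using jM by simp
    have e5: "real (Suc M - j + 1) = m + 1" unfolding m_def using jM by simp
    have rA: "(m + 1) * esym {..<Suc M} x (j - 1) = real (Suc M) * esym {..<M} y (j - 1)"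
    proof -
      have "j - 1 \<le> M" using jM by simp
      from y(2)[OF this] show ?thesis unfolding e1 .
    qed
    have rB: "m * esym {..<Suc M} x j = real (Suc M) * esym {..<M} y j"
      using y(2)[of j] jM unfolding m_def by simp
    have rC: "(m - 1) * esym {..<Suc M} x (j + 1) = real (Suc M) * esym {..<M} y (j + 1)"
    proof -
      have "j + 1 \<le> M" using jM by simp
      from y(2)[OF this] show ?thesis unfolding e2 .
    qed
    have "(real j + 1) * (m + 1) * (esym {..<Suc M} x (j - 1) * esym {..<Suc M} x (j + 1))
        \<le> real j * m * (esym {..<Suc M} x j)^2"
      using newton_alg[where j="real j", OF m2 _ _ rA rB rC] IH Suc.prems(2) unfolding e3 e4 by (simp add: add.commute)
    thus ?thesis using e5 unfolding m_def by (simp add: add.commute)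
  qed
qed


lemma eventually_notin_finite:
  assumes "finite B"
  shows "eventually (\<lambda>e. e \<notin> B) (at_right (0::real))"
proof -
  have "eventually (\<lambda>e. \<forall>b\<in>B. e \<noteq> b) (at_right (0::real))"
    using assms by (intro eventually_ball_finite) (auto intro: eventually_neq_at_within)
  thus ?thesis by (rule eventually_mono) auto
qed

lemma esym_tendsto:
  "((\<lambda>e. esym S (\<lambda>i. x i + e * g i) k) \<longlongrightarrow> esym S x k) (at_right (0::real))"
proof -
  have "((\<lambda>e::real. e) \<longlongrightarrow> 0) (at_right 0)" by (rule tendsto_ident_at)
  hence "\<And>i. ((\<lambda>e. x i + e * g i) \<longlongrightarrow> x i + 0 * g i) (at_right 0)"
    by (intro tendsto_intros)
  hence "\<And>i. ((\<lambda>e. x i + e * g i) \<longlongrightarrow> x i) (at_right 0)" by simp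
  thus ?thesis unfolding esym_def by (intro tendsto_intros)
qed

lemma newton_nat:
  assumes j: "1 \<le> j" "j + 1 \<le> N"
  shows "real (j + 1) * real (N - j + 1) * (esym {..<N} x (j - 1) * esym {..<N} x (j + 1))
     \<le> real j * real (N - j) * (esym {..<N} x j)^2"
proof -
  define xe where "xe = (\<lambda>e::real. \<lambda>i. x i + e * real i)"
  define phi where "phi = (\<lambda>y. real j * real (N - j) * (esym {..<N} y j)^2 -
      real (j + 1) * real (N - j + 1) * (esym {..<N} y (j - 1) * esym {..<N} y (j + 1)))"
  define Bad where "Bad = (\<lambda>(i, l). (x l - x i) / (real i - real l)) ` ({..<N} \<times> {..<N})"
  have finB: "finite Bad" unfolding Bad_def by simp
  have inj: "inj_on (xe e) {..<N}" if "e \<notin> Bad" for e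
  proof (rule inj_onI)
    fix i l assume il: "i \<in> {..<N}" "l \<in> {..<N}" "xe e i = xe e l"
    show "i = l"
    proof (rule ccontr)
      assume "i \<noteq> l"
      hence ne: "real i - real l \<noteq> 0" by simp
      have "e * (real i - real l) = x l - x i" using il(3) unfolding xe_def by (simp add: algebra_simps)
      hence "e = (x l - x i) / (real i - real l)" using ne by (simp add: field_simps)
      hence "e \<in> Bad" unfolding Bad_def using il(1,2) by force
      thus False using that by simp
    qed
  qed
  have ev: "eventually (\<lambda>e. 0 \<le> phi (xe e)) (at_right 0)"
    using eventually_notin_finite[OF finB]
  proof (rule eventually_mono)
    fix e assume "e \<notin> Bad"
    from newton_inj[OF inj[OF this] j] show "0 \<le> phi (xe e)" unfolding phi_def by simp
  qed
  have lim: "((\<lambda>e. phi (xe e)) \<longlongrightarrow> phi x) (at_right 0)"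
    unfolding phi_def xe_def by (intro tendsto_intros esym_tendsto)
  have "0 \<le> phi x"
    using tendsto_lowerbound[OF lim ev] by simp
  thus ?thesis unfolding phi_def by simp
qed

lemma newton_weak:
  assumes fin: "finite S" and j: "1 \<le> j"
  shows "esym S x (j - 1) * esym S x (j + 1) \<le> (esym S x j)^2"
proof (cases "j + 1 \<le> card S")
  case False
  hence "esym S x (j + 1) = 0" using esym_gt[OF fin] by simp
  thus ?thesis by simp
next
  case True
  define N where "N = card S"
  obtain h where h: "bij_betw h {0..<N} S" using ex_bij_betw_nat_finite[OF fin] N_def by blast
  have r: "\<And>k. esym S x k = esym {..<N} (x \<circ> h) k" using esym_reindex[OF h] by (simp add: lessThan_atLeast0)
  define A where "A = esym S x (j - 1)"
  define B where "B = esym S x j"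
  define C where "C = esym S x (j + 1)"
  have ineq: "real (j + 1) * real (N - j + 1) * (A * C) \<le> real j * real (N - j) * B^2"
    unfolding A_def B_def C_def r using newton_nat[OF j, of N "x \<circ> h"] True N_def by simp
  have pos: "0 < real j * real (N - j)" using j True N_def by simp
  have lt: "real j * real (N - j) \<le> real (j + 1) * real (N - j + 1)"
    by (intro mult_mono) auto
  show ?thesis
  proof (cases "A * C \<le> 0")
    case True thus ?thesis unfolding A_def B_def C_def by (meson order_trans zero_le_power2)
  next
    case False
    hence "real j * real (N - j) * (A * C) \<le> real (j + 1) * real (N - j + 1) * (A * C)"
      using lt by (intro mult_right_mono) auto
    hence "real j * real (N - j) * (A * C) \<le> real j * real (N - j) * B^2" using ineq by linarith
    hence "A * C \<le> B^2" using mult_left_le_imp_le[OF _ pos] by blast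
    thus ?thesis unfolding A_def B_def C_def .
  qed
qed

definition posc :: "nat \<Rightarrow> 'a set \<Rightarrow> ('a \<Rightarrow> real) \<Rightarrow> bool" where
  "posc m S x \<longleftrightarrow> (\<forall>j. 1 \<le> j \<and> j \<le> m \<longrightarrow> esym S x j > 0)"

lemma del_contra:
  fixes s0 s1 s2 a :: real
  assumes "s0 > 0" "s1 \<le> 0" "s1 + a * s0 > 0" "s2 + a * s1 > 0" "s0 * s2 \<le> s1^2"
  shows False
proof -
  have "a * s0 > - s1" using assms by simp
  have "s2 > - (a * s1)" using assms by simp
  hence h1: "s0 * s2 > s0 * (- (a * s1))" using assms(1) by (intro mult_strict_left_mono) auto
  have h2: "s0 * (- (a * s1)) = (- s1) * (a * s0)" by (simp add: algebra_simps)
  have h3: "(- s1) * (a * s0) \<ge> (- s1) * (- s1)"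
    using \<open>a * s0 > - s1\<close> assms(2) by (intro mult_left_mono) auto
  have "s0 * s2 > s1^2" using h1 h2 h3 by (simp add: power2_eq_square algebra_simps)
  thus False using assms(5) by simp
qed

lemma del1:
  assumes fin: "finite S" and i: "i \<in> S" and P: "posc m S x"
  shows "posc (m - 1) (S - {i}) x"
proof -
  let ?E = "esym (S - {i}) x"
  have finS': "finite (S - {i})" using fin by simp
  have rec: "\<And>k. esym S x (Suc k) = ?E (Suc k) + x i * ?E k" using esym_remove[OF fin i] by blast
  have "\<forall>j. j \<le> m - 1 \<longrightarrow> ?E j > 0"
  proof (intro allI)
    fix j show "j \<le> m - 1 \<longrightarrow> ?E j > 0"
    proof (induction j)
      case 0 thus ?case using finS' by simp
    next
      case (Suc j)
      show ?case
      proof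
        assume sj: "Suc j \<le> m - 1"
        hence s0: "?E j > 0" using Suc.IH by simp
        show "?E (Suc j) > 0"
        proof (rule ccontr)
          assume "\<not> ?E (Suc j) > 0"
          hence s1: "?E (Suc j) \<le> 0" by simp
          have a1: "esym S x (Suc j) > 0" using P sj unfolding posc_def by simp
          have a2: "esym S x (Suc (Suc j)) > 0" using P sj unfolding posc_def by simp
          have nw: "?E j * ?E (Suc (Suc j)) \<le> (?E (Suc j))^2"
            using newton_weak[OF finS', of "Suc j" x] by simp
          show False
            using del_contra[OF s0 s1 _ _ nw, of "x i"] a1 a2 rec[of j] rec[of "Suc j"]
            by (simp add: algebra_simps)
        qed
      qed
    qed
  qed
  thus ?thesis unfolding posc_def by auto
qed

lemma del_set:
  assumes "finite I" "finite S" "I \<subseteq> S" "posc m S x"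
  shows "posc (m - card I) (S - I) x"
  using assms
proof (induction I rule: finite_induct)
  case empty thus ?case by simp
next
  case (insert a I)
  have "posc (m - card I) (S - I) x" using insert by simp
  moreover have "a \<in> S - I" using insert by auto
  ultimately have "posc (m - card I - 1) (S - I - {a}) x"
    using del1[of "S - I" a "m - card I" x] insert by simp
  moreover have "S - I - {a} = S - insert a I" by auto
  moreover have "m - card I - 1 = m - card (insert a I)" using insert by simp
  ultimately show ?case by simp
qed

lemma esym_cong: "(\<And>i. i \<in> S \<Longrightarrow> x i = y i) \<Longrightarrow> esym S x j = esym S y j"
  unfolding esym_def by (intro sum.cong refl prod.cong) auto

lemma sigma_esym: "sigma m \<kappa> = esym UNIV (\<lambda>i. \<kappa> $ i) m"
  unfolding sigma_def esym_def by simp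

lemma sigma_del_esym: "sigma_del m I (\<kappa>::real^'n) = esym (UNIV - I) (\<lambda>i. \<kappa> $ i) m"
proof -
  have "sigma_del m I \<kappa> = esym UNIV (\<lambda>i. zero_out I \<kappa> $ i) m"
    unfolding sigma_del_def sigma_esym ..
  also have "\<dots> = esym (UNIV - I) (\<lambda>i. zero_out I \<kappa> $ i) m"
    by (rule esym_zero_set) (auto simp: zero_out_def)
  also have "\<dots> = esym (UNIV - I) (\<lambda>i. \<kappa> $ i) m"
    by (rule esym_cong) (auto simp: zero_out_def)
  finally show ?thesis .
qed

lemma cone_posc: "\<kappa> \<in> garding_cone m \<longleftrightarrow> posc m UNIV (\<lambda>i. (\<kappa>::real^'n) $ i)"
  unfolding garding_cone_def posc_def sigma_esym by auto

lemma cone_del: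
  assumes "(\<kappa>::real^'n) \<in> garding_cone m" "1 \<le> j" "j + card I \<le> m"
  shows "sigma_del j I \<kappa> > 0"
proof -
  have "posc (m - card I) (UNIV - I) (\<lambda>i. \<kappa> $ i)"
    using del_set[of I UNIV m] assms(1) unfolding cone_posc by simp
  thus ?thesis using assms(2,3) unfolding posc_def sigma_del_esym by simp
qed

lemma cone_del0:
  assumes "(\<kappa>::real^'n) \<in> garding_cone m" "j + card I \<le> m"
  shows "sigma_del j I \<kappa> > 0"
proof (cases j)
  case 0 thus ?thesis unfolding sigma_del_esym by simp
next
  case (Suc j') thus ?thesis using cone_del[OF assms(1) _ assms(2)] by simp
qed

definition C2 :: "(real^'n \<Rightarrow> real) \<Rightarrow> (real^'n \<Rightarrow> real^'n \<Rightarrow> real) \<Rightarrow> (real^'n \<Rightarrow> real^'n \<Rightarrow> real) \<Rightarrow> real^'n \<Rightarrow> bool" where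
  "C2 f F1 F2 x \<longleftrightarrow> (\<forall>\<^sub>F y in nhds x. (f has_derivative F1 y) (at y)) \<and>
      (\<forall>v. ((\<lambda>y. F1 y v) has_derivative (\<lambda>w. F2 w v)) (at x))"

lemma nhds_to_at: "eventually P (nhds x) \<Longrightarrow> eventually P (at x within s)"
  unfolding eventually_at_filter by (erule eventually_mono) auto

lemma nhds_point: "eventually P (nhds x) \<Longrightarrow> P x"
  unfolding eventually_nhds_conv_at by simp

lemma C2_at: "C2 f F1 F2 x \<Longrightarrow> (f has_derivative F1 x) (at x)"
  unfolding C2_def using nhds_point by blast

lemma partial_eq:
  assumes "(f has_derivative F) (at y)"
  shows "partial r f y = F (axis r 1)"
proof -
  have "((\<lambda>t. y + t *\<^sub>R axis r 1) has_derivative (\<lambda>t. t *\<^sub>R axis r 1)) (at (0::real))"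
    by (intro derivative_eq_intros) auto
  moreover have "(f has_derivative F) (at (y + (0::real) *\<^sub>R axis r 1))" using assms by simp
  ultimately have "((\<lambda>t. f (y + t *\<^sub>R axis r 1)) has_derivative (\<lambda>t. F (t *\<^sub>R axis r 1))) (at 0)"
    by (rule has_derivative_compose)
  moreover have "(\<lambda>t. F (t *\<^sub>R axis r 1)) = (\<lambda>t. F (axis r 1) * t)"
    using linear_scale[OF has_derivative_linear[OF assms]] by (auto simp: mult.commute)
  ultimately have "((\<lambda>t. f (y + t *\<^sub>R axis r 1)) has_field_derivative F (axis r 1)) (at 0)"
    unfolding has_field_derivative_def by simp
  thus ?thesis unfolding partial_def by (rule DERIV_imp_deriv)
qed

lemma C2_second:
  assumes "C2 f F1 F2 x"
  shows "partial p (partial r f) x = F2 (axis p 1) (axis r 1)"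
proof -
  from assms have ev: "\<forall>\<^sub>F y in nhds x. (f has_derivative F1 y) (at y)"
    and D2: "\<And>v. ((\<lambda>y. F1 y v) has_derivative (\<lambda>w. F2 w v)) (at x)"
    unfolding C2_def by blast+
  have evp: "\<forall>\<^sub>F y in nhds x. partial r f y = F1 y (axis r 1)"
    using ev by (rule eventually_mono) (rule partial_eq)
  define g where "g = (\<lambda>t::real. x + t *\<^sub>R axis p 1)"
  have glim: "filterlim g (nhds x) (nhds 0)"
  proof -
    have "((\<lambda>t::real. x + t *\<^sub>R axis p 1) \<longlongrightarrow> x + 0 *\<^sub>R axis p 1) (nhds 0)"
      by (intro tendsto_intros filterlim_ident)
    thus ?thesis unfolding g_def by simp
  qed
  have evt: "\<forall>\<^sub>F t in nhds 0. F1 (g t) (axis r 1) = partial r f (g t)"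
    using eventually_compose_filterlim[OF evp glim] by (rule eventually_mono) simp
  have gd: "(g has_derivative (\<lambda>t. t *\<^sub>R axis p 1)) (at 0)"
    unfolding g_def by (intro derivative_eq_intros) auto
  have "((\<lambda>y. F1 y (axis r 1)) has_derivative (\<lambda>w. F2 w (axis r 1))) (at (g 0))"
    using D2 unfolding g_def by simp
  from has_derivative_compose[OF gd this]
  have "((\<lambda>t. F1 (g t) (axis r 1)) has_derivative (\<lambda>t. F2 (t *\<^sub>R axis p 1) (axis r 1))) (at 0)" .
  hence "((\<lambda>t. partial r f (g t)) has_derivative (\<lambda>t. F2 (t *\<^sub>R axis p 1) (axis r 1))) (at 0)"
    by (rule has_derivative_transform_eventually) (use nhds_to_at[OF evt] nhds_point[OF evt] in auto)
  moreover have "(\<lambda>t. F2 (t *\<^sub>R axis p 1) (axis r 1)) = (\<lambda>t. F2 (axis p 1) (axis r 1) * t)"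
    using linear_scale[OF has_derivative_linear[OF D2]] by (auto simp: mult.commute)
  ultimately have "((\<lambda>t. partial r f (g t)) has_field_derivative F2 (axis p 1) (axis r 1)) (at 0)"
    unfolding has_field_derivative_def by simp
  thus ?thesis unfolding partial_def g_def by (rule DERIV_imp_deriv)
qed

lemma C2_lin2:
  assumes "C2 f F1 F2 x"
  shows "linear (F2 w)"
proof -
  from assms have ev: "\<forall>\<^sub>F y in nhds x. (f has_derivative F1 y) (at y)"
    and D2: "\<And>v. ((\<lambda>y. F1 y v) has_derivative (\<lambda>w. F2 w v)) (at x)"
    unfolding C2_def by blast+
  have evl: "\<forall>\<^sub>F y in nhds x. linear (F1 y)"
    using ev by (rule eventually_mono) (rule has_derivative_linear)
  have add: "F2 w (u + v) = F2 w u + F2 w v" for u v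
  proof -
    have "((\<lambda>y. F1 y u + F1 y v) has_derivative (\<lambda>w. F2 w u + F2 w v)) (at x)"
      using D2[of u] D2[of v] by (rule has_derivative_add)
    hence "((\<lambda>y. F1 y (u + v)) has_derivative (\<lambda>w. F2 w u + F2 w v)) (at x)"
    proof (rule has_derivative_transform_eventually)
      have "\<forall>\<^sub>F y in nhds x. F1 y u + F1 y v = F1 y (u + v)"
        using evl by (rule eventually_mono) (simp add: linear_add)
      thus "\<forall>\<^sub>F y in at x. F1 y u + F1 y v = F1 y (u + v)" by (rule nhds_to_at)
      show "F1 x u + F1 x v = F1 x (u + v)" using nhds_point[OF evl] by (simp add: linear_add)
    qed simp
    from has_derivative_unique[OF D2[of "u + v"] this] show ?thesis by meson
  qed
  have scale: "F2 w (c *\<^sub>R v) = c *\<^sub>R F2 w v" for c v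
  proof -
    have "((\<lambda>y. c * F1 y v) has_derivative (\<lambda>w. c * F2 w v)) (at x)"
      using D2[of v] by (rule has_derivative_mult_right)
    hence "((\<lambda>y. F1 y (c *\<^sub>R v)) has_derivative (\<lambda>w. c * F2 w v)) (at x)"
    proof (rule has_derivative_transform_eventually)
      have "\<forall>\<^sub>F y in nhds x. c * F1 y v = F1 y (c *\<^sub>R v)"
        using evl by (rule eventually_mono) (simp add: linear_scale)
      thus "\<forall>\<^sub>F y in at x. c * F1 y v = F1 y (c *\<^sub>R v)" by (rule nhds_to_at)
      show "c * F1 x v = F1 x (c *\<^sub>R v)" using nhds_point[OF evl] by (simp add: linear_scale)
    qed simp
    from has_derivative_unique[OF D2[of "c *\<^sub>R v"] this] show ?thesis by (simp add: fun_eq_iff)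
  qed
  show ?thesis by (rule linearI) (use add scale in auto)
qed

lemma C2_d2:
  assumes "C2 f F1 F2 x"
  shows "d2 f x \<xi> = F2 \<xi> \<xi>"
proof -
  have l1: "linear (\<lambda>w. F2 w v)" for v
    using assms unfolding C2_def by (meson has_derivative_linear)
  have l2: "linear (F2 w)" for w using C2_lin2[OF assms] .
  have xi: "\<xi> = (\<Sum>i\<in>UNIV. \<xi> $ i *\<^sub>R axis i 1)"
    using basis_expansion[of \<xi>] by (simp add: scalar_mult_eq_scaleR)
  have "F2 \<xi> \<xi> = (\<Sum>p\<in>UNIV. \<xi> $ p * F2 (axis p 1) \<xi>)"
    by (subst xi, subst linear_sum[OF l1]) (simp add: linear_scale[OF l1])
  also have "\<dots> = (\<Sum>p\<in>UNIV. \<xi> $ p * (\<Sum>r\<in>UNIV. \<xi> $ r * F2 (axis p 1) (axis r 1)))"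
    by (subst xi, subst linear_sum[OF l2]) (simp add: linear_scale[OF l2])
  also have "\<dots> = d2 f x \<xi>"
    unfolding d2_def C2_second[OF assms]
    by (simp add: sum_distrib_left algebra_simps)
  finally show ?thesis ..
qed

lemma C2_const: "C2 (\<lambda>y. c) (\<lambda>y v. 0) (\<lambda>w v. 0) x"
  unfolding C2_def by simp

lemma C2_coord: "C2 (\<lambda>y. y $ i) (\<lambda>y v. v $ i) (\<lambda>w v. 0) x"
  unfolding C2_def
  by (intro conjI allI always_eventually has_derivative_const bounded_linear_imp_has_derivative bounded_linear_vec_nth)

lemma C2_add:
  assumes "C2 f F1 F2 x" "C2 g G1 G2 x"
  shows "C2 (\<lambda>y. f y + g y) (\<lambda>y v. F1 y v + G1 y v) (\<lambda>w v. F2 w v + G2 w v) x"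
  using assms unfolding C2_def
  by (auto intro: has_derivative_add elim: eventually_elim2)

lemma C2_cmult:
  assumes "C2 f F1 F2 x"
  shows "C2 (\<lambda>y. c * f y) (\<lambda>y v. c * F1 y v) (\<lambda>w v. c * F2 w v) x"
  using assms unfolding C2_def
  by (auto intro: has_derivative_mult_right elim: eventually_mono)

lemma C2_sum:
  assumes "finite A" "\<And>i. i \<in> A \<Longrightarrow> C2 (f i) (F1 i) (F2 i) x"
  shows "C2 (\<lambda>y. \<Sum>i\<in>A. f i y) (\<lambda>y v. \<Sum>i\<in>A. F1 i y v) (\<lambda>w v. \<Sum>i\<in>A. F2 i w v) x"
  using assms
proof (induction A rule: finite_induct)
  case empty thus ?case using C2_const[of 0 x] by simp
next
  case (insert a A)
  have "C2 (\<lambda>y. f a y + (\<Sum>i\<in>A. f i y)) (\<lambda>y v. F1 a y v + (\<Sum>i\<in>A. F1 i y v))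
        (\<lambda>w v. F2 a w v + (\<Sum>i\<in>A. F2 i w v)) x"
    using insert by (intro C2_add) auto
  thus ?case using insert by simp
qed

lemma C2_mult:
  assumes f: "C2 f F1 F2 x" and g: "C2 g G1 G2 x"
  shows "C2 (\<lambda>y. f y * g y) (\<lambda>y v. f y * G1 y v + F1 y v * g y)
     (\<lambda>w v. F1 x w * G1 x v + F1 x v * G1 x w + f x * G2 w v + g x * F2 w v) x"
  unfolding C2_def
proof
  show "\<forall>\<^sub>F y in nhds x. ((\<lambda>y. f y * g y) has_derivative (\<lambda>v. f y * G1 y v + F1 y v * g y)) (at y)"
    using f g unfolding C2_def by (auto intro: has_derivative_mult elim: eventually_elim2)
  show "\<forall>v. ((\<lambda>y. f y * G1 y v + F1 y v * g y) has_derivative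
      (\<lambda>w. F1 x w * G1 x v + F1 x v * G1 x w + f x * G2 w v + g x * F2 w v)) (at x)"
  proof
    fix v
    have fx: "(f has_derivative F1 x) (at x)" using C2_at[OF f] .
    have gx: "(g has_derivative G1 x) (at x)" using C2_at[OF g] .
    have d1: "((\<lambda>y. G1 y v) has_derivative (\<lambda>w. G2 w v)) (at x)" using g unfolding C2_def by blast
    have d2: "((\<lambda>y. F1 y v) has_derivative (\<lambda>w. F2 w v)) (at x)" using f unfolding C2_def by blast
    have "((\<lambda>y. f y * G1 y v + F1 y v * g y) has_derivative
      (\<lambda>w. (f x * G2 w v + F1 x w * G1 x v) + (F1 x v * G1 x w + F2 w v * g x))) (at x)"
      by (intro has_derivative_add has_derivative_mult fx gx d1 d2)
    thus "((\<lambda>y. f y * G1 y v + F1 y v * g y) has_derivative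
      (\<lambda>w. F1 x w * G1 x v + F1 x v * G1 x w + f x * G2 w v + g x * F2 w v)) (at x)"
      by (rule has_derivative_eq_rhs) (auto simp: fun_eq_iff algebra_simps)
  qed
qed

lemma C2_inverse:
  assumes f: "C2 f F1 F2 x" and nz: "f x \<noteq> 0"
  shows "C2 (\<lambda>y. inverse (f y)) (\<lambda>y v. - F1 y v / (f y)^2)
     (\<lambda>w v. (2 * F1 x w * F1 x v - f x * F2 w v) / (f x)^3) x"
  unfolding C2_def
proof
  have fx: "(f has_derivative F1 x) (at x)" using C2_at[OF f] .
  have "isCont f x" using has_derivative_continuous[OF fx] .
  hence "\<forall>\<^sub>F y in at x. f y \<noteq> 0" using nz unfolding isCont_def by (rule tendsto_imp_eventually_ne)
  hence evnz: "\<forall>\<^sub>F y in nhds x. f y \<noteq> 0" using nz unfolding eventually_nhds_conv_at by simp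
  have evd: "\<forall>\<^sub>F y in nhds x. (f has_derivative F1 y) (at y)" using f unfolding C2_def by blast
  show "\<forall>\<^sub>F y in nhds x. ((\<lambda>y. inverse (f y)) has_derivative (\<lambda>v. - F1 y v / (f y)^2)) (at y)"
    using evnz evd
  proof (eventually_elim)
    case (elim y)
    have "((\<lambda>y. inverse (f y)) has_derivative (\<lambda>h. - (inverse (f y) * F1 y h * inverse (f y)))) (at y)"
      using elim by (intro Deriv.has_derivative_inverse) auto
    thus ?case by (rule has_derivative_eq_rhs) (auto simp: fun_eq_iff field_simps power2_eq_square)
  qed
  show "\<forall>v. ((\<lambda>y. - F1 y v / (f y)^2) has_derivative
     (\<lambda>w. (2 * F1 x w * F1 x v - f x * F2 w v) / (f x)^3)) (at x)"
  proof
    fix v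
    have d2: "((\<lambda>y. F1 y v) has_derivative (\<lambda>w. F2 w v)) (at x)" using f unfolding C2_def by blast
    have i2: "((\<lambda>y. inverse (f y * f y)) has_derivative
       (\<lambda>h. - (inverse (f x * f x) * (f x * F1 x h + F1 x h * f x) * inverse (f x * f x)))) (at x)"
      using nz by (intro Deriv.has_derivative_inverse has_derivative_mult fx) auto
    have "((\<lambda>y. - F1 y v * inverse (f y * f y)) has_derivative
       (\<lambda>w. - F1 x v * (- (inverse (f x * f x) * (f x * F1 x w + F1 x w * f x) * inverse (f x * f x)))
            + - F2 w v * inverse (f x * f x))) (at x)"
      by (intro has_derivative_mult has_derivative_minus d2 i2)
    moreover have "(\<lambda>y. - F1 y v * inverse (f y * f y)) = (\<lambda>y. - F1 y v / (f y)^2)"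
      by (auto simp: fun_eq_iff field_simps power2_eq_square)
    ultimately show "((\<lambda>y. - F1 y v / (f y)^2) has_derivative
       (\<lambda>w. (2 * F1 x w * F1 x v - f x * F2 w v) / (f x)^3)) (at x)"
      using nz by (auto elim!: has_derivative_eq_rhs simp: fun_eq_iff field_simps power2_eq_square power3_eq_cube)
  qed
qed

lemma C2_transfer:
  assumes g: "C2 g F1 F2 x" and ev: "\<forall>\<^sub>F y in nhds x. f y = g y"
  shows "C2 f F1 F2 x"
  unfolding C2_def
proof
  have ev2: "\<forall>\<^sub>F y in nhds x. \<forall>\<^sub>F z in nhds y. f z = g z" using ev unfolding eventually_eventually .
  show "\<forall>\<^sub>F y in nhds x. (f has_derivative F1 y) (at y)"
    using ev2 g[unfolded C2_def, THEN conjunct1]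
  proof (eventually_elim)
    case (elim y)
    show ?case
      by (rule has_derivative_transform_eventually[OF elim(2)])
         (use nhds_to_at[OF elim(1)] nhds_point[OF elim(1)] in \<open>auto simp: eq_commute\<close>)
  qed
  show "\<forall>v. ((\<lambda>y. F1 y v) has_derivative (\<lambda>w. F2 w v)) (at x)" using g unfolding C2_def by blast
qed

lemma bl_zero_out: "bounded_linear (zero_out J :: real^'n \<Rightarrow> real^'n)"
proof -
  have "linear (zero_out J :: real^'n \<Rightarrow> real^'n)"
    by (rule linearI) (auto simp: zero_out_def vec_eq_iff)
  thus ?thesis by (simp add: linear_conv_bounded_linear)
qed

lemma C2_zero_out:
  fixes x :: "real^'n"
  assumes f: "C2 f F1 F2 (zero_out J x)"
  shows "C2 (\<lambda>y. f (zero_out J y)) (\<lambda>y v. F1 (zero_out J y) (zero_out J v))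
           (\<lambda>w v. F2 (zero_out J w) (zero_out J v)) x"
  unfolding C2_def
proof
  have bl: "bounded_linear (zero_out J :: real^'n \<Rightarrow> real^'n)" by (rule bl_zero_out)
  have lim: "filterlim (zero_out J) (nhds (zero_out J x)) (nhds x)"
    using bounded_linear.tendsto[OF bl filterlim_ident] by simp
  have ev: "\<forall>\<^sub>F y in nhds x. (f has_derivative F1 (zero_out J y)) (at (zero_out J y))"
    using eventually_compose_filterlim[OF f[unfolded C2_def, THEN conjunct1] lim] .
  show "\<forall>\<^sub>F y in nhds x. ((\<lambda>y. f (zero_out J y)) has_derivative (\<lambda>v. F1 (zero_out J y) (zero_out J v))) (at y)"
    using ev
  proof (rule eventually_mono)
    fix y assume "(f has_derivative F1 (zero_out J y)) (at (zero_out J y))"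
    from has_derivative_compose[OF bounded_linear_imp_has_derivative[OF bl] this]
    show "((\<lambda>y. f (zero_out J y)) has_derivative (\<lambda>v. F1 (zero_out J y) (zero_out J v))) (at y)" .
  qed
  show "\<forall>v. ((\<lambda>y. F1 (zero_out J y) (zero_out J v)) has_derivative (\<lambda>w. F2 (zero_out J w) (zero_out J v))) (at x)"
  proof
    fix v
    have "((\<lambda>y. F1 y (zero_out J v)) has_derivative (\<lambda>w. F2 w (zero_out J v))) (at (zero_out J x))"
      using f unfolding C2_def by blast
    from has_derivative_compose[OF bounded_linear_imp_has_derivative[OF bl] this]
    show "((\<lambda>y. F1 (zero_out J y) (zero_out J v)) has_derivative (\<lambda>w. F2 (zero_out J w) (zero_out J v))) (at x)" .
  qed
qed

definition C2ex :: "(real^'n \<Rightarrow> real) \<Rightarrow> real^'n \<Rightarrow> bool" where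
  "C2ex f x \<longleftrightarrow> (\<exists>F1 F2. C2 f F1 F2 x)"

lemma C2ex_mult: "C2ex f x \<Longrightarrow> C2ex g x \<Longrightarrow> C2ex (\<lambda>y. f y * g y) x"
  unfolding C2ex_def using C2_mult by blast

lemma C2ex_prod:
  assumes "finite A" "\<And>i. i \<in> A \<Longrightarrow> C2ex (f i) x"
  shows "C2ex (\<lambda>y. \<Prod>i\<in>A. f i y) x"
  using assms
proof (induction A rule: finite_induct)
  case empty thus ?case unfolding C2ex_def using C2_const by fastforce
next
  case (insert a A)
  have "C2ex (\<lambda>y. f a y * (\<Prod>i\<in>A. f i y)) x" using insert by (intro C2ex_mult) auto
  thus ?case using insert by simp
qed

lemma C2ex_sum:
  assumes "finite A" "\<And>i. i \<in> A \<Longrightarrow> C2ex (f i) x"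
  shows "C2ex (\<lambda>y. \<Sum>i\<in>A. f i y) x"
proof -
  from assms(2) have "\<forall>i. \<exists>p. i \<in> A \<longrightarrow> C2 (f i) (fst p) (snd p) x" unfolding C2ex_def by fastforce
  from choice[OF this] obtain P where P: "\<forall>i. i \<in> A \<longrightarrow> C2 (f i) (fst (P i)) (snd (P i)) x" by (erule exE)
  have "C2 (\<lambda>y. \<Sum>i\<in>A. f i y) (\<lambda>y v. \<Sum>i\<in>A. fst (P i) y v) (\<lambda>w v. \<Sum>i\<in>A. snd (P i) w v) x"
    by (rule C2_sum[OF assms(1)]) (use P in blast)
  thus ?thesis unfolding C2ex_def by blast
qed

lemma C2ex_sigma: "C2ex (sigma m) x"
proof -
  have "C2ex (\<lambda>y. \<Sum>S\<in>{S. card S = m}. \<Prod>i\<in>S. y $ i) x"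
    by (intro C2ex_sum C2ex_prod) (auto simp: C2ex_def intro: C2_coord)
  thus ?thesis unfolding sigma_def[abs_def] .
qed

lemma C2ex_q:
  assumes "sigma (k - 1) x \<noteq> 0"
  shows "C2ex (q k) x"
proof -
  obtain A1 A2 where a: "C2 (sigma k) A1 A2 x" using C2ex_sigma unfolding C2ex_def by blast
  obtain B1 B2 where b: "C2 (sigma (k - 1)) B1 B2 x" using C2ex_sigma unfolding C2ex_def by blast
  have "C2ex (\<lambda>y. sigma k y * inverse (sigma (k - 1) y)) x"
    using C2_mult[OF a C2_inverse[OF b assms]] unfolding C2ex_def by blast
  thus ?thesis unfolding q_def[abs_def] by (simp add: divide_inverse)
qed

lemma perp_min:
  fixes u p :: "real^'n"
  shows "norm (u - ((u \<bullet> p) / (norm p)^2) *\<^sub>R p)^2 \<le> norm (u - t *\<^sub>R p)^2"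
proof (cases "p = 0")
  case True thus ?thesis by simp
next
  case False
  hence np: "(norm p)^2 > 0" by simp
  define c where "c = (u \<bullet> p) / (norm p)^2"
  have e1: "norm (u - c *\<^sub>R p)^2 = (norm u)^2 - 2 * c * (u \<bullet> p) + c^2 * (norm p)^2"
    unfolding power2_norm_eq_inner by (simp add: inner_diff_left inner_diff_right inner_commute power2_eq_square algebra_simps)
  have e2: "norm (u - t *\<^sub>R p)^2 = (norm u)^2 - 2 * t * (u \<bullet> p) + t^2 * (norm p)^2"
    unfolding power2_norm_eq_inner by (simp add: inner_diff_left inner_diff_right inner_commute power2_eq_square algebra_simps)
  have up: "u \<bullet> p = c * (norm p)^2" unfolding c_def using np by simp
  have "norm (u - t *\<^sub>R p)^2 - norm (u - c *\<^sub>R p)^2 = (t - c)^2 * (norm p)^2"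
    unfolding e1 e2 up by (simp add: power2_eq_square algebra_simps)
  moreover have "(t - c)^2 * (norm p)^2 \<ge> 0" by simp
  ultimately show ?thesis unfolding c_def by linarith
qed

lemma norm_zero_out_sum:
  fixes u p :: "real^'n"
  shows "norm (zero_out I u - t *\<^sub>R zero_out I p)^2 = (\<Sum>i\<in>UNIV - I. (u $ i - t * p $ i)^2)"
proof -
  have "norm (zero_out I u - t *\<^sub>R zero_out I p)^2 = (\<Sum>i\<in>UNIV. (if i \<in> I then 0 else (u $ i - t * p $ i)^2))"
    unfolding power2_norm_eq_inner inner_vec_def
    by (intro sum.cong refl) (simp add: zero_out_def power2_eq_square)
  also have "\<dots> = (\<Sum>i\<in>UNIV - I. (u $ i - t * p $ i)^2)"
    by (rule sum.mono_neutral_cong_right) auto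
  finally show ?thesis .
qed

lemma part1:
  fixes \<kappa> \<xi> :: "real^'n"
  assumes cone: "\<kappa> \<in> garding_cone (l + 2)" and cI: "card I = l"
  shows "- d2 (q_del 2 I) \<kappa> \<xi> \<ge> (norm (perp_part I \<kappa> \<xi>))^2 / sigma_del 1 I \<kappa>"
proof -
  define J where "J = UNIV - I"
  have finJ: "finite J" by simp
  define S where "S = (\<lambda>y::real^'n. \<Sum>i\<in>J. y $ i)"
  define N where "N = (\<lambda>y::real^'n. \<Sum>i\<in>J. y $ i * y $ i)"
  have s1: "\<And>y. sigma_del 1 I y = S y"
    unfolding sigma_del_esym S_def J_def using esym_1[of "UNIV - I"] by simp
  have s2: "\<And>y. sigma_del 2 I y = ((S y)^2 - N y) / 2"
    unfolding sigma_del_esym S_def N_def J_def using esym_2[of "UNIV - I"] by (simp add: power2_eq_square)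
  have qd: "\<And>y. q_del 2 I y = 1/2 * S y + (- 1/2) * (N y * inverse (S y))"
  proof -
    fix y
    show "q_del 2 I y = 1/2 * S y + (- 1/2) * (N y * inverse (S y))"
    proof (cases "S y = 0")
      case True thus ?thesis unfolding q_del_def using s1 s2 by simp
    next
      case False thus ?thesis unfolding q_del_def using s1 s2
        by (simp add: field_simps power2_eq_square)
    qed
  qed
  have spos: "S \<kappa> > 0" using cone_del[OF cone, of 1 I] cI s1 by simp
  have cS: "C2 S (\<lambda>y v. \<Sum>i\<in>J. v $ i) (\<lambda>w v. \<Sum>i\<in>J. 0) \<kappa>"
    unfolding S_def by (rule C2_sum[of J "\<lambda>i y. y $ i" "\<lambda>i y v. v $ i" "\<lambda>i w v. 0"]) (auto intro: C2_coord)
  have cN: "C2 N (\<lambda>y v. \<Sum>i\<in>J. y $ i * v $ i + v $ i * y $ i)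
          (\<lambda>w v. \<Sum>i\<in>J. w $ i * v $ i + v $ i * w $ i + \<kappa> $ i * 0 + \<kappa> $ i * 0) \<kappa>"
    unfolding N_def
    by (rule C2_sum[of J "\<lambda>i y. y $ i * y $ i" "\<lambda>i y v. y $ i * v $ i + v $ i * y $ i"
          "\<lambda>i w v. w $ i * v $ i + v $ i * w $ i + \<kappa> $ i * 0 + \<kappa> $ i * 0"])
       (simp, rule C2_mult[OF C2_coord C2_coord])
  have cI: "C2 (\<lambda>y. inverse (S y)) (\<lambda>y v. - (\<Sum>i\<in>J. v $ i) / (S y)^2)
      (\<lambda>w v. (2 * (\<Sum>i\<in>J. w $ i) * (\<Sum>i\<in>J. v $ i) - S \<kappa> * (\<Sum>i\<in>J. 0)) / (S \<kappa>)^3) \<kappa>"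
    using C2_inverse[OF cS] spos by simp
  note cG = C2_add[OF C2_cmult[OF cS, of "1/2"] C2_cmult[OF C2_mult[OF cN cI], of "-1/2"]]
  have ev: "\<forall>\<^sub>F y in nhds \<kappa>. q_del 2 I y = 1/2 * S y + (- 1/2) * (N y * inverse (S y))"
    using qd by simp
  note d = C2_d2[OF C2_transfer[OF cG ev], of \<xi>]
  define t where "t = S \<xi> / S \<kappa>"
  define A where "A = (\<Sum>i\<in>J. \<xi> $ i * \<xi> $ i)"
  define B where "B = (\<Sum>i\<in>J. \<kappa> $ i * \<xi> $ i)"
  define C where "C = N \<kappa>"
  have fA: "(\<Sum>i\<in>J. 2 * (\<xi> $ i * \<xi> $ i)) = 2 * A" unfolding A_def by (simp add: sum_distrib_left)
  have fB: "(\<Sum>i\<in>J. 2 * (\<kappa> $ i * \<xi> $ i)) = 2 * B" unfolding B_def by (simp add: sum_distrib_left)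
  have key: "(\<Sum>i\<in>J. (\<xi> $ i - t * \<kappa> $ i)^2) = A - 2 * t * B + t^2 * C"
    unfolding A_def B_def C_def N_def
    by (simp add: power2_eq_square algebra_simps sum.distrib sum_subtractf sum_distrib_left)
  have sne: "S \<kappa> \<noteq> 0" using spos by simp
  have sx: "sum (($) \<xi>) J = S \<xi>" unfolding S_def by simp
  have "- d2 (q_del 2 I) \<kappa> \<xi> = (A - 2 * t * B + t^2 * C) / S \<kappa>"
    unfolding d
    apply (simp add: sum.distrib)
    unfolding fA fB C_def[symmetric] S_def[symmetric] t_def
    using sne sx by (simp add: field_simps power2_eq_square power3_eq_cube)
  also have "\<dots> = (\<Sum>i\<in>J. (\<xi> $ i - t * \<kappa> $ i)^2) / S \<kappa>" unfolding key ..
  finally have "- d2 (q_del 2 I) \<kappa> \<xi> = (\<Sum>i\<in>J. (\<xi> $ i - t * \<kappa> $ i)^2) / S \<kappa>" .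
  also have "\<dots> \<ge> (norm (perp_part I \<kappa> \<xi>))^2 / S \<kappa>"
  proof (rule divide_right_mono)
    show "(norm (perp_part I \<kappa> \<xi>))^2 \<le> (\<Sum>i\<in>J. (\<xi> $ i - t * \<kappa> $ i)^2)"
      unfolding perp_part_def J_def norm_zero_out_sum[symmetric] by (rule perp_min)
  qed (use spos in simp)
  finally show ?thesis using s1 by simp
qed

lemma alg_h:
  fixes a b \<alpha> \<beta> \<gamma> :: real
  assumes nz: "a + b \<noteq> 0"
  shows "2 * (\<alpha> * (b * (- \<alpha> - \<beta>) / (a + b)^2 + \<beta> * inverse (a + b))) +
    a * (2 * (\<beta> * (- \<alpha> - \<beta>)) / (a + b)^2 +
         b * ((2 * \<alpha> + 2 * \<beta>) * (\<alpha> + \<beta>) - (a + b) * \<gamma>) / (a + b) ^ 3 +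
         inverse (a + b) * \<gamma>) =
    a^2 * \<gamma> / (a + b)^2 - 2 * (b * \<alpha> - a * \<beta>)^2 / (a + b) ^ 3"
proof -
  define D where "D = a + b"
  have bD: "b = D - a" unfolding D_def by simp
  have D0: "D \<noteq> 0" using nz unfolding D_def .
  show ?thesis unfolding D_def[symmetric] unfolding bD using D0
    by (simp add: field_simps power2_eq_square power3_eq_cube)
qed

lemma h_rule:
  fixes x :: "real^'n"
  assumes cg: "C2 g G1 G2 x" and nz: "x $ i + g x \<noteq> 0"
  shows "\<exists>H1 H2. C2 (\<lambda>y. c * (y $ i * (g y * inverse (y $ i + g y)))) H1 H2 x \<and>
     (\<forall>\<xi>. H2 \<xi> \<xi> = c * (- 2 * (g x * \<xi> $ i - x $ i * G1 x \<xi>)^2 / (x $ i + g x)^3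
                         + (x $ i)^2 * G2 \<xi> \<xi> / (x $ i + g x)^2))"
proof -
  note cS = C2_add[OF C2_coord[of i x] cg]
  note cInv = C2_inverse[OF cS nz]
  note cC = C2_cmult[OF C2_mult[OF C2_coord[of i x] C2_mult[OF cg cInv]], of c]
  show ?thesis
    apply (intro exI conjI)
     apply (rule cC)
    apply (intro allI)
    apply simp
    apply (rule disjI2)
    apply (rule alg_h[OF nz])
    done
qed


lemma sigma_del_cont:
  fixes \<kappa> :: "real^'n"
  assumes "sigma_del j J \<kappa> \<noteq> 0"
  shows "\<forall>\<^sub>F y in nhds \<kappa>. sigma_del j J y \<noteq> 0"
proof -
  obtain F1 F2 where c: "C2 (sigma j) F1 F2 (zero_out J \<kappa>)" using C2ex_sigma unfolding C2ex_def by blast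
  have "((\<lambda>y. sigma j (zero_out J y)) has_derivative (\<lambda>v. F1 (zero_out J \<kappa>) (zero_out J v))) (at \<kappa>)"
    using C2_at[OF C2_zero_out[OF c]] .
  hence "isCont (\<lambda>y. sigma_del j J y) \<kappa>"
    unfolding sigma_del_def[abs_def] by (rule has_derivative_continuous)
  hence "\<forall>\<^sub>F y in at \<kappa>. sigma_del j J y \<noteq> 0" using assms unfolding isCont_def
    by (rule tendsto_imp_eventually_ne)
  thus ?thesis using assms unfolding eventually_nhds_conv_at by simp
qed

lemma part2:
  fixes \<kappa> \<xi> :: "real^'n"
  assumes k: "1 \<le> k" and cone: "\<kappa> \<in> garding_cone (k + 2)"
  shows "- d2 (q_del (k + 1) {i1}) \<kappa> \<xi> \<ge>
         - (\<Sum>i\<in>UNIV - {i1}.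
              (\<kappa> $ i)^2 * d2 (q k) (zero_out {i1, i} \<kappa>) (zero_out {i1, i} \<xi>)
              / (real (k + 1) * (q_del k {i1, i} \<kappa> + \<kappa> $ i)^2))"
proof -
  define K where "K = UNIV - {i1}"
  have finK: "finite K" by simp
  define c where "c = 1 / real (k + 1)"
  define g where "g = (\<lambda>i y. q k (zero_out {i1, i} y))"
  have gq: "\<And>i y. g i y = q_del k {i1, i} y"
    unfolding g_def q_def q_del_def sigma_del_def ..
  have gq2: "\<And>i y. g i y = sigma_del k {i1, i} y / sigma_del (k - 1) {i1, i} y"
    unfolding gq q_del_def ..
  have KI: "\<And>i. i \<in> K \<Longrightarrow> UNIV - {i1, i} = K - {i}" unfolding K_def by auto
  have E1: "\<And>j y. sigma_del j {i1} (y::real^'n) = esym K (\<lambda>i. y $ i) j"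
    unfolding sigma_del_esym K_def ..
  have E2: "\<And>i j y. i \<in> K \<Longrightarrow> sigma_del j {i1, i} (y::real^'n) = esym (K - {i}) (\<lambda>i. y $ i) j"
    unfolding sigma_del_esym using KI by simp
  have rec: "\<And>i y. i \<in> K \<Longrightarrow> sigma_del k {i1} y = sigma_del k {i1, i} y + y $ i * sigma_del (k - 1) {i1, i} y"
  proof -
    fix i and y :: "real^'n" assume i: "i \<in> K"
    have "esym K (\<lambda>i. y $ i) (Suc (k - 1)) = esym (K - {i}) (\<lambda>i. y $ i) (Suc (k - 1)) + y $ i * esym (K - {i}) (\<lambda>i. y $ i) (k - 1)"
      by (rule esym_remove[OF finK i])
    thus "sigma_del k {i1} y = sigma_del k {i1, i} y + y $ i * sigma_del (k - 1) {i1, i} y"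
      unfolding E1 E2[OF i] using k by simp
  qed
  have eul: "\<And>y. real (k + 1) * sigma_del (k + 1) {i1} y = (\<Sum>i\<in>K. y $ i * sigma_del k {i1, i} y)"
  proof -
    fix y :: "real^'n"
    have "real (Suc k) * esym K (\<lambda>i. y $ i) (Suc k) = (\<Sum>i\<in>K. y $ i * esym (K - {i}) (\<lambda>i. y $ i) k)"
      by (rule esym_euler[OF finK])
    also have "\<dots> = (\<Sum>i\<in>K. y $ i * sigma_del k {i1, i} y)"
      by (intro sum.cong refl) (simp add: E2)
    finally show "real (k + 1) * sigma_del (k + 1) {i1} y = (\<Sum>i\<in>K. y $ i * sigma_del k {i1, i} y)"
      unfolding E1 by simp
  qed
  have card2: "\<And>i. i \<in> K \<Longrightarrow> card {i1, i} = 2" unfolding K_def by auto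
  have p1: "sigma_del k {i1} \<kappa> > 0" using cone_del0[OF cone, of k "{i1}"] by simp
  have p2: "\<And>i. i \<in> K \<Longrightarrow> sigma_del (k - 1) {i1, i} \<kappa> > 0"
    using cone_del0[OF cone] card2 k by simp
  have Dpos: "\<And>i. i \<in> K \<Longrightarrow> \<kappa> $ i + g i \<kappa> > 0"
  proof -
    fix i assume i: "i \<in> K"
    have "\<kappa> $ i + g i \<kappa> = sigma_del k {i1} \<kappa> / sigma_del (k - 1) {i1, i} \<kappa>"
      unfolding gq2 rec[OF i] using p2[OF i] by (simp add: field_simps)
    thus "\<kappa> $ i + g i \<kappa> > 0" using p1 p2[OF i] by simp
  qed
  have evnz: "\<forall>\<^sub>F y in nhds \<kappa>. \<forall>i\<in>K. sigma_del (k - 1) {i1, i} y \<noteq> 0"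
    using finK by (intro eventually_ball_finite ballI sigma_del_cont) (use p2 in force)+
  define h where "h = (\<lambda>i y. c * (y $ i * (g i y * inverse (y $ i + g i y))))"
  have ident: "\<forall>\<^sub>F y in nhds \<kappa>. q_del (k + 1) {i1} y = (\<Sum>i\<in>K. h i y)"
    using evnz
  proof (rule eventually_mono)
    fix y :: "real^'n" assume nz: "\<forall>i\<in>K. sigma_del (k - 1) {i1, i} y \<noteq> 0"
    have hi: "h i y = c * (y $ i * sigma_del k {i1, i} y / sigma_del k {i1} y)" if i: "i \<in> K" for i
    proof -
      have nzi: "sigma_del (k - 1) {i1, i} y \<noteq> 0" using nz i by blast
      have s: "y $ i + g i y = sigma_del k {i1} y / sigma_del (k - 1) {i1, i} y"
        unfolding gq2 rec[OF i] using nzi by (simp add: field_simps)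
      show ?thesis
      proof (cases "sigma_del k {i1} y = 0")
        case True thus ?thesis unfolding h_def s by simp
      next
        case False thus ?thesis unfolding h_def s gq2 using nzi rec[OF i] by (simp add: field_simps)
      qed
    qed
    have "(\<Sum>i\<in>K. h i y) = c * ((\<Sum>i\<in>K. y $ i * sigma_del k {i1, i} y) / sigma_del k {i1} y)"
      by (simp add: hi sum_distrib_left sum_divide_distrib)
    also have "\<dots> = c * (real (k + 1) * sigma_del (k + 1) {i1} y / sigma_del k {i1} y)"
      unfolding eul ..
    also have "\<dots> = q_del (k + 1) {i1} y" unfolding c_def q_del_def by simp
    finally show "q_del (k + 1) {i1} y = (\<Sum>i\<in>K. h i y)" ..
  qed
  have each: "\<forall>i. \<exists>p. i \<in> K \<longrightarrow> C2 (h i) (fst p) (snd p) \<kappa> \<and>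
      snd p \<xi> \<xi> \<le> c * ((\<kappa> $ i)^2 * d2 (q k) (zero_out {i1, i} \<kappa>) (zero_out {i1, i} \<xi>) / (\<kappa> $ i + g i \<kappa>)^2)"
  proof (intro allI)
    fix i
    show "\<exists>p. i \<in> K \<longrightarrow> C2 (h i) (fst p) (snd p) \<kappa> \<and>
      snd p \<xi> \<xi> \<le> c * ((\<kappa> $ i)^2 * d2 (q k) (zero_out {i1, i} \<kappa>) (zero_out {i1, i} \<xi>) / (\<kappa> $ i + g i \<kappa>)^2)"
    proof (cases "i \<in> K")
      case False thus ?thesis by simp
    next
      case True
      have "sigma (k - 1) (zero_out {i1, i} \<kappa>) \<noteq> 0" using p2[OF True] unfolding sigma_del_def by simp
      then obtain Q1 Q2 where cq: "C2 (q k) Q1 Q2 (zero_out {i1, i} \<kappa>)" using C2ex_q unfolding C2ex_def by blast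
      note cg = C2_zero_out[OF cq]
      have D0: "\<kappa> $ i + g i \<kappa> \<noteq> 0" using Dpos[OF True] by simp
      have cg': "C2 (g i) (\<lambda>y v. Q1 (zero_out {i1, i} y) (zero_out {i1, i} v))
          (\<lambda>w v. Q2 (zero_out {i1, i} w) (zero_out {i1, i} v)) \<kappa>"
        using cg unfolding g_def .
      obtain H1 H2 where H: "C2 (h i) H1 H2 \<kappa>"
        "H2 \<xi> \<xi> = c * (- 2 * (g i \<kappa> * \<xi> $ i - \<kappa> $ i * Q1 (zero_out {i1, i} \<kappa>) (zero_out {i1, i} \<xi>))^2 / (\<kappa> $ i + g i \<kappa>)^3
                         + (\<kappa> $ i)^2 * Q2 (zero_out {i1, i} \<xi>) (zero_out {i1, i} \<xi>) / (\<kappa> $ i + g i \<kappa>)^2)"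
        using h_rule[OF cg' D0, of c] unfolding h_def by blast
      have dq: "d2 (q k) (zero_out {i1, i} \<kappa>) (zero_out {i1, i} \<xi>) = Q2 (zero_out {i1, i} \<xi>) (zero_out {i1, i} \<xi>)"
        by (rule C2_d2[OF cq])
      have cpos: "c \<ge> 0" unfolding c_def by simp
      have "- 2 * (g i \<kappa> * \<xi> $ i - \<kappa> $ i * Q1 (zero_out {i1, i} \<kappa>) (zero_out {i1, i} \<xi>))^2 / (\<kappa> $ i + g i \<kappa>)^3 \<le> 0"
        using Dpos[OF True] by (simp add: divide_nonpos_pos)
      hence "H2 \<xi> \<xi> \<le> c * ((\<kappa> $ i)^2 * d2 (q k) (zero_out {i1, i} \<kappa>) (zero_out {i1, i} \<xi>) / (\<kappa> $ i + g i \<kappa>)^2)"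
        unfolding H(2) dq using cpos by (intro mult_left_mono) auto
      thus ?thesis using H(1) by (intro exI[of _ "(H1, H2)"]) simp
    qed
  qed
  from choice[OF each] obtain P where P: "\<forall>i. i \<in> K \<longrightarrow> C2 (h i) (fst (P i)) (snd (P i)) \<kappa> \<and>
      snd (P i) \<xi> \<xi> \<le> c * ((\<kappa> $ i)^2 * d2 (q k) (zero_out {i1, i} \<kappa>) (zero_out {i1, i} \<xi>) / (\<kappa> $ i + g i \<kappa>)^2)"
    by (erule exE)
  have csum: "C2 (\<lambda>y. \<Sum>i\<in>K. h i y) (\<lambda>y v. \<Sum>i\<in>K. fst (P i) y v) (\<lambda>w v. \<Sum>i\<in>K. snd (P i) w v) \<kappa>"
    by (rule C2_sum[OF finK]) (use P in blast)
  have "d2 (q_del (k + 1) {i1}) \<kappa> \<xi> = (\<Sum>i\<in>K. snd (P i) \<xi> \<xi>)"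
    using C2_d2[OF C2_transfer[OF csum ident]] by simp
  also have "\<dots> \<le> (\<Sum>i\<in>K. c * ((\<kappa> $ i)^2 * d2 (q k) (zero_out {i1, i} \<kappa>) (zero_out {i1, i} \<xi>) / (\<kappa> $ i + g i \<kappa>)^2))"
    using P by (intro sum_mono) blast
  also have "\<dots> = (\<Sum>i\<in>UNIV - {i1}.
              (\<kappa> $ i)^2 * d2 (q k) (zero_out {i1, i} \<kappa>) (zero_out {i1, i} \<xi>)
              / (real (k + 1) * (q_del k {i1, i} \<kappa> + \<kappa> $ i)^2))"
    unfolding K_def c_def gq by (intro sum.cong refl) (simp add: add.commute)
  finally show ?thesis by simp
qed

theorem lemma2p17:
  fixes \<kappa> \<xi> :: "real^'n"
  shows
  "(\<forall>(l::nat) (I::'n set).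
       \<kappa> \<in> garding_cone (l + 2) \<and> card I = l \<longrightarrow>
       - d2 (q_del 2 I) \<kappa> \<xi> \<ge> (norm (perp_part I \<kappa> \<xi>))^2 / sigma_del 1 I \<kappa>)
   \<and>
   (\<forall>(k::nat) (i1::'n).
       1 \<le> k \<and> \<kappa> \<in> garding_cone (k + 2) \<longrightarrow>
       - d2 (q_del (k + 1) {i1}) \<kappa> \<xi> \<ge>
         - (\<Sum>i\<in>UNIV - {i1}.
              (\<kappa> $ i)^2 * d2 (q k) (zero_out {i1, i} \<kappa>) (zero_out {i1, i} \<xi>)
              / (real (k + 1) * (q_del k {i1, i} \<kappa> + \<kappa> $ i)^2)))"
  using part1 part2 by blast

end
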